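(* Let $T$ be an anonymous, non-counterfactual, reasonable comparison test. If $T\not\sim\mathcal{D}$, then $T$ is not error-free.
   Context: Let $\Omega=\{0,1\}$ and let $\Omega^\infty$ be the set of infinite sequences $\omega=(\omega_1,\omega_2,\dots)$; $\omega^t=(\omega_1,\dots,\omega_t)$ denotes the prefix and also the cylinder set $\{\hat\omega:\hat\omega^t=\omega^t\}$; $\Omega^\infty$ carries the $\sigma$-algebra generated by cylinders. $\Delta(\Omega)$ is the set of probability distributions on $\Omega$. A forecasting strategy is a function $f:\bigcup_{t\ge 0}(\Omega\times\Delta(\Omega)\times\Delta(\Omega))^t\to\Delta(\Omega)$; $F$ is the set of all forecasting strategies. For $f=(f_0,f_1)$ and $\omega$, the play path $h=h(\omega,f_0,f_1)\in(\Omega\times\Delta(\Omega)\times\Delta(\Omega))^\infty$ is defined by $h^0=\emptyset$, $h^t=(h^{t-1},(\omega_t,f_0(h^{t-1}),f_1(h^{t-1})))$. The induced measures satisfy $P_i^f(\omega^t)=\prod_{n=1}^t f_i(h^{n-1})[\omega_n]$, $i\in\{0,1\}$. A comparison test is a function $T:\Omega^\infty\times F\times F\to\{0,\tfrac12,1\}$, measurable in $\omega$ for each fixed pair; write $\{T(\cdot,f)=k\}=\{\omega:T(\omega,f_0,f_1)=k\}$. $T$ is anonymous if $T(\omega,f_0,f_1)=1-T(\omega,f_1,f_0)$ always. $T$ is non-counterfactual if there is $\hat T:(\Omega\times\Delta(\Omega)\times\Delta(\Omega))^\infty\to\{0,\tfrac12,1\}$ with $T(\omega,f_0,f_1)=\hat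 T(h(\omega,f_0,f_1))$. $T$ is error-free if for all $f$ and $i\in\{0,1\}$, $P_{1-i}^f(\{T(\cdot,f)=i\})=0$. $T$ is reasonable if for all $f$, $i\in\{0,1\}$ and measurable $A$: $P_i^f(A)>0$ and $P_{1-i}^f(A)=0$ imply $P_i^f(A\cap\{T(\cdot,f)=i\})>0$. $T\sim\hat T$ means: for every pair $f$ and every $i\in\{0,1\}$, $P_i^f(\{\omega:T(\omega,f_0,f_1)\ne\hat T(\omega,f_0,f_1)\})=0$. Likelihood ratios along $h=h(\omega,f_0,f_1)$: $D^t_{f_0}f_1(\omega)=\prod_{n=1}^t \frac{f_1(h^{n-1})[\omega_n]}{f_0(h^{n-1})[\omega_n]}$ and $D^t_{f_1}f_0(\omega)=\prod_{n=1}^t \frac{f_0(h^{n-1})[\omega_n]}{f_1(h^{n-1})[\omega_n]}$. For $(j,k)\in\{(0,1),(1,0)\}$, $\overline{D}_{f_j}f_k=\limsup_t D^t_{f_j}f_k$ and $\underline{D}_{f_j}f_k=\liminf_t D^t_{f_j}f_k$ if $f_j(h^{n-1})[\omega_n]>0$ for all $n$, and both $=+\infty$ otherwise; if they coincide and are finite the common value is the derivative $D_{f_j}f_k(\omega)$. The derivative test: $\mathcal{D}(\omega,f_0,f_1)=1$ if $D_{f_1}f_0(\omega)$ exists and equals $0$; $=0$ if $D_{f_0}f_1(\omega)$ exists and equals $0$; $=\tfrac12$ otherwise. *)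

theory Defs
  imports "HOL-Probability.Probability"
begin

text \<open>Outcomes Omega = {0,1} are modelled by bool (True = 1); Delta(Omega) by bool pmf.
  Infinite sequences are nat => bool, with omega_1 = omega 0.\<close>

type_synonym hist_elem = "bool \<times> bool pmf \<times> bool pmf"
type_synonym strategy = "hist_elem list \<Rightarrow> bool pmf"

definition Seq :: "(nat \<Rightarrow> bool) measure" where
  "Seq = PiM UNIV (\<lambda>_. count_space UNIV)"

definition cyl :: "(nat \<Rightarrow> bool) \<Rightarrow> nat \<Rightarrow> (nat \<Rightarrow> bool) set" where
  "cyl \<omega> t = {\<omega>' \<in> space Seq. \<forall>n<t. \<omega>' n = \<omega> n}"

fun hist :: "strategy \<Rightarrow> strategy \<Rightarrow> (nat \<Rightarrow> bool) \<Rightarrow> nat \<Rightarrow> hist_elem list" where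
  "hist f0 f1 \<omega> 0 = []"
| "hist f0 f1 \<omega> (Suc t) = hist f0 f1 \<omega> t @ [(\<omega> t, f0 (hist f0 f1 \<omega> t), f1 (hist f0 f1 \<omega> t))]"

definition play :: "strategy \<Rightarrow> strategy \<Rightarrow> (nat \<Rightarrow> bool) \<Rightarrow> nat \<Rightarrow> hist_elem" where
  "play f0 f1 \<omega> n = (\<omega> n, f0 (hist f0 f1 \<omega> n), f1 (hist f0 f1 \<omega> n))"

definition sel :: "strategy \<Rightarrow> strategy \<Rightarrow> nat \<Rightarrow> strategy" where
  "sel f0 f1 i = (if i = 0 then f0 else f1)"

text \<open>The induced measure P_i^f: the probability measure on Seq with the prescribed
  cylinder probabilities (unique by the pi-lambda theorem).\<close>
definition Pf :: "strategy \<Rightarrow> strategy \<Rightarrow> nat \<Rightarrow> (nat \<Rightarrow> bool) measure" where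
  "Pf f0 f1 i = (THE M. sets M = sets Seq \<and> prob_space M \<and>
     (\<forall>\<omega> t. emeasure M (cyl \<omega> t) =
        ennreal (\<Prod>n<t. pmf (sel f0 f1 i (hist f0 f1 \<omega> n)) (\<omega> n))))"

definition Dt :: "strategy \<Rightarrow> strategy \<Rightarrow> nat \<Rightarrow> nat \<Rightarrow> (nat \<Rightarrow> bool) \<Rightarrow> nat \<Rightarrow> real" where
  "Dt f0 f1 j k \<omega> t = (\<Prod>n<t. pmf (sel f0 f1 k (hist f0 f1 \<omega> n)) (\<omega> n)
                              / pmf (sel f0 f1 j (hist f0 f1 \<omega> n)) (\<omega> n))"

definition upperD :: "strategy \<Rightarrow> strategy \<Rightarrow> nat \<Rightarrow> nat \<Rightarrow> (nat \<Rightarrow> bool) \<Rightarrow> ereal" where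
  "upperD f0 f1 j k \<omega> =
     (if \<forall>n. pmf (sel f0 f1 j (hist f0 f1 \<omega> n)) (\<omega> n) > 0
      then limsup (\<lambda>t. ereal (Dt f0 f1 j k \<omega> t)) else \<infinity>)"

definition lowerD :: "strategy \<Rightarrow> strategy \<Rightarrow> nat \<Rightarrow> nat \<Rightarrow> (nat \<Rightarrow> bool) \<Rightarrow> ereal" where
  "lowerD f0 f1 j k \<omega> =
     (if \<forall>n. pmf (sel f0 f1 j (hist f0 f1 \<omega> n)) (\<omega> n) > 0
      then liminf (\<lambda>t. ereal (Dt f0 f1 j k \<omega> t)) else \<infinity>)"

definition deriv_is :: "strategy \<Rightarrow> strategy \<Rightarrow> nat \<Rightarrow> nat \<Rightarrow> (nat \<Rightarrow> bool) \<Rightarrow> real \<Rightarrow> bool" where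
  "deriv_is f0 f1 j k \<omega> x \<longleftrightarrow>
     upperD f0 f1 j k \<omega> = lowerD f0 f1 j k \<omega> \<and> \<bar>upperD f0 f1 j k \<omega>\<bar> \<noteq> \<infinity> \<and>
     upperD f0 f1 j k \<omega> = ereal x"

definition derivTest :: "(nat \<Rightarrow> bool) \<Rightarrow> strategy \<Rightarrow> strategy \<Rightarrow> real" where
  "derivTest \<omega> f0 f1 =
     (if deriv_is f0 f1 1 0 \<omega> 0 then 1
      else if deriv_is f0 f1 0 1 \<omega> 0 then 0 else 1/2)"

type_synonym test = "(nat \<Rightarrow> bool) \<Rightarrow> strategy \<Rightarrow> strategy \<Rightarrow> real"

definition comparison_test :: "test \<Rightarrow> bool" where
  "comparison_test T \<longleftrightarrow>
     (\<forall>\<omega> f0 f1. T \<omega> f0 f1 \<in> {0, 1/2, 1}) \<and>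
     (\<forall>f0 f1. (\<lambda>\<omega>. T \<omega> f0 f1) \<in> borel_measurable Seq)"

definition anonymous :: "test \<Rightarrow> bool" where
  "anonymous T \<longleftrightarrow> (\<forall>\<omega> f0 f1. T \<omega> f0 f1 = 1 - T \<omega> f1 f0)"

definition non_counterfactual :: "test \<Rightarrow> bool" where
  "non_counterfactual T \<longleftrightarrow>
     (\<exists>Th :: (nat \<Rightarrow> hist_elem) \<Rightarrow> real. (\<forall>h. Th h \<in> {0, 1/2, 1}) \<and>
        (\<forall>\<omega> f0 f1. T \<omega> f0 f1 = Th (play f0 f1 \<omega>)))"

definition error_free :: "test \<Rightarrow> bool" where
  "error_free T \<longleftrightarrow>
     (\<forall>f0 f1 i. i \<le> 1 \<longrightarrow>
        emeasure (Pf f0 f1 (1 - i)) {\<omega> \<in> space Seq. T \<omega> f0 f1 = real i} = 0)"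

definition reasonable :: "test \<Rightarrow> bool" where
  "reasonable T \<longleftrightarrow>
     (\<forall>f0 f1 i A. i \<le> 1 \<longrightarrow> A \<in> sets Seq \<longrightarrow>
        emeasure (Pf f0 f1 i) A > 0 \<longrightarrow> emeasure (Pf f0 f1 (1 - i)) A = 0 \<longrightarrow>
        emeasure (Pf f0 f1 i) (A \<inter> {\<omega> \<in> space Seq. T \<omega> f0 f1 = real i}) > 0)"

definition test_equiv :: "test \<Rightarrow> test \<Rightarrow> bool" where
  "test_equiv T T' \<longleftrightarrow>
     (\<forall>f0 f1 i. i \<le> 1 \<longrightarrow>
        emeasure (Pf f0 f1 i) {\<omega> \<in> space Seq. T \<omega> f0 f1 \<noteq> T' \<omega> f0 f1} = 0)"

end

theory Submission
  imports Defs
begin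


lemma space_Seq[simp]: "space Seq = UNIV"
  by (simp add: Seq_def space_PiM)

definition agree :: "(nat \<Rightarrow> bool) \<Rightarrow> (nat \<Rightarrow> bool) \<Rightarrow> nat \<Rightarrow> bool" where
  "agree a b t \<longleftrightarrow> (\<forall>n<t. a n = b n)"

definition lvl :: "nat \<Rightarrow> (nat \<Rightarrow> bool) set \<Rightarrow> bool" where
  "lvl t B \<longleftrightarrow> (\<forall>a b. a \<in> B \<longrightarrow> agree a b t \<longrightarrow> b \<in> B)"

lemma cyl_alt: "cyl w t = {a. agree a w t}"
  by (auto simp: cyl_def agree_def)

lemma agree_sym: "agree a b t \<Longrightarrow> agree b a t" by (auto simp: agree_def)
lemma agree_trans: "agree a b t \<Longrightarrow> agree b c t \<Longrightarrow> agree a c t" by (auto simp: agree_def)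
lemma agree_mono: "agree a b t \<Longrightarrow> s \<le> t \<Longrightarrow> agree a b s" by (auto simp: agree_def)

lemma lvl_mono: "lvl t B \<Longrightarrow> t \<le> s \<Longrightarrow> lvl s B"
  unfolding lvl_def using agree_mono by blast
lemma lvl_cyl: "lvl t (cyl w t)"
  unfolding lvl_def cyl_alt using agree_sym agree_trans by blast
lemma lvl_Un: "lvl t A \<Longrightarrow> lvl t B \<Longrightarrow> lvl t (A \<union> B)" unfolding lvl_def by blast
lemma lvl_Int: "lvl t A \<Longrightarrow> lvl t B \<Longrightarrow> lvl t (A \<inter> B)" unfolding lvl_def by blast
lemma lvl_Diff: "lvl t A \<Longrightarrow> lvl t B \<Longrightarrow> lvl t (A - B)" unfolding lvl_def using agree_sym by blast
lemma lvl_UNIV: "lvl t UNIV" unfolding lvl_def by blast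
lemma lvl_empty: "lvl t {}" unfolding lvl_def by blast
lemma lvl_Compl: "lvl t B \<Longrightarrow> lvl t (UNIV - B)" using lvl_Diff lvl_UNIV by blast

lemma coord_sets: "{a. a n = b} \<in> sets Seq"
proof -
  have "(\<lambda>x. x n) \<in> measurable Seq (count_space UNIV)"
    unfolding Seq_def by (rule measurable_component_singleton) simp
  then have "(\<lambda>x. x n) -` {b} \<inter> space Seq \<in> sets Seq"
    by (rule measurable_sets) simp
  then show ?thesis by (simp add: vimage_def)
qed

lemma cyl_sets: "cyl w t \<in> sets Seq"
proof (induction t)
  case 0
  then show ?case using sets.top[of Seq] by (simp add: cyl_def)
next
  case (Suc t)
  have "cyl w (Suc t) = cyl w t \<inter> {a. a t = w t}"
    by (auto simp: cyl_def less_Suc_eq)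
  then show ?case using Suc coord_sets by simp
qed

definition trunc :: "nat \<Rightarrow> (nat \<Rightarrow> bool) \<Rightarrow> (nat \<Rightarrow> bool)" where
  "trunc t a = (\<lambda>n. if n < t then a n else False)"

definition reps :: "nat \<Rightarrow> (nat \<Rightarrow> bool) set \<Rightarrow> (nat \<Rightarrow> bool) set" where
  "reps t B = {a \<in> B. \<forall>k\<ge>t. \<not> a k}"

lemma agree_trunc: "agree a (trunc t a) t" by (simp add: agree_def trunc_def)

lemma reps_finite: "finite (reps t B)"
proof -
  have "reps t B \<subseteq> (\<lambda>\<sigma>. (\<lambda>n. if n < t then \<sigma> ! n else False)) ` {\<sigma>::bool list. length \<sigma> = t}"
  proof
    fix a assume a: "a \<in> reps t B"
    have "a = (\<lambda>n. if n < t then map a [0..<t] ! n else False)"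
      using a by (auto simp: reps_def fun_eq_iff)
    then show "a \<in> (\<lambda>\<sigma>. (\<lambda>n. if n < t then \<sigma> ! n else False)) ` {\<sigma>::bool list. length \<sigma> = t}"
      by (intro image_eqI[of _ _ "map a [0..<t]"]) auto
  qed
  moreover have "finite {\<sigma>::bool list. length \<sigma> = t}"
    using finite_lists_length_eq[of "UNIV::bool set" t] by simp
  ultimately show ?thesis by (meson finite_imageI finite_subset)
qed

lemma reps_sub: "reps t B \<subseteq> B" by (auto simp: reps_def)

lemma reps_Union: "lvl t B \<Longrightarrow> B = (\<Union>a\<in>reps t B. cyl a t)"
proof
  assume L: "lvl t B"
  show "B \<subseteq> (\<Union>a\<in>reps t B. cyl a t)"
  proof
    fix b assume b: "b \<in> B"
    have "trunc t b \<in> B" using L b agree_trunc unfolding lvl_def by blast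
    then have "trunc t b \<in> reps t B" by (auto simp: reps_def trunc_def)
    moreover have "b \<in> cyl (trunc t b) t" using agree_trunc by (simp add: cyl_alt)
    ultimately show "b \<in> (\<Union>a\<in>reps t B. cyl a t)" by blast
  qed
  show "(\<Union>a\<in>reps t B. cyl a t) \<subseteq> B"
    using L by (auto simp: cyl_alt reps_def lvl_def dest: agree_sym)
qed

lemma reps_disj: "disjoint_family_on (\<lambda>a. cyl a t) (reps t B)"
  unfolding disjoint_family_on_def
proof (intro ballI impI)
  fix a b assume a: "a \<in> reps t B" and b: "b \<in> reps t B" and ne: "a \<noteq> b"
  then obtain k where k: "a k \<noteq> b k" by (auto simp: fun_eq_iff)
  with a b have "k < t" by (auto simp: reps_def) (meson not_le)
  with k show "cyl a t \<inter> cyl b t = {}" by (auto simp: cyl_alt agree_def)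
qed

lemma lvl_sets: "lvl t B \<Longrightarrow> B \<in> sets Seq"
  by (subst reps_Union[of t B]) (auto intro!: sets.finite_UN reps_finite cyl_sets)

lemma lvl_sum:
  assumes "lvl t B" "sets M = sets Seq"
  shows "emeasure M B = (\<Sum>a\<in>reps t B. emeasure M (cyl a t))"
proof -
  have "emeasure M B = emeasure M (\<Union>a\<in>reps t B. cyl a t)"
    using reps_Union[OF assms(1)] by simp
  also have "\<dots> = (\<Sum>a\<in>reps t B. emeasure M (cyl a t))"
    by (rule sum_emeasure[symmetric]) (auto simp: assms(2) cyl_sets reps_disj reps_finite)
  finally show ?thesis .
qed



lemma ville_base:
  assumes sP: "sets P = sets Seq" and sQ: "sets Q = sets Seq" and L: "lvl s E"
    and G: "\<And>w. w \<in> E \<Longrightarrow> ennreal c * emeasure P (cyl w s) \<le> emeasure Q (cyl w s)"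
  shows "ennreal c * emeasure P E \<le> emeasure Q E"
proof -
  have "ennreal c * emeasure P E = (\<Sum>a\<in>reps s E. ennreal c * emeasure P (cyl a s))"
    by (simp add: lvl_sum[OF L sP] sum_distrib_left)
  also have "\<dots> \<le> (\<Sum>a\<in>reps s E. emeasure Q (cyl a s))"
    by (intro sum_mono G) (use reps_sub in blast)
  also have "\<dots> = emeasure Q E" by (simp add: lvl_sum[OF L sQ])
  finally show ?thesis .
qed

definition HH :: "((nat \<Rightarrow> bool) \<Rightarrow> nat \<Rightarrow> bool) \<Rightarrow> (nat \<Rightarrow> bool) set \<Rightarrow> nat \<Rightarrow> nat \<Rightarrow> (nat \<Rightarrow> bool) set" where
  "HH G B t N = {w\<in>B. \<exists>s. t \<le> s \<and> s \<le> N \<and> G w s}"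

lemma lvl_HH:
  assumes Gl: "\<And>s. lvl s {w. G w s}" and L: "lvl t B" and tN: "t \<le> N"
  shows "lvl N (HH G B t N)"
  unfolding lvl_def HH_def
proof (intro allI impI)
  fix a b assume a: "a \<in> {w \<in> B. \<exists>s\<ge>t. s \<le> N \<and> G w s}" and ag: "agree a b N"
  then obtain s where s: "t \<le> s" "s \<le> N" "G a s" "a \<in> B" by blast
  have "b \<in> B" using L s(4) agree_mono[OF ag tN] unfolding lvl_def by blast
  moreover have "G b s" using Gl[of s] s agree_mono[OF ag s(2)] unfolding lvl_def by blast
  ultimately show "b \<in> {w \<in> B. \<exists>s\<ge>t. s \<le> N \<and> G w s}" using s by blast
qed

lemma ville_fin:
  assumes sP: "sets P = sets Seq" and sQ: "sets Q = sets Seq"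
    and Gl: "\<And>s. lvl s {w. G w s}"
    and Gi: "\<And>w s. G w s \<Longrightarrow> ennreal c * emeasure P (cyl w s) \<le> emeasure Q (cyl w s)"
  shows "lvl t B \<Longrightarrow> ennreal c * emeasure P (HH G B t (t+d)) \<le> emeasure Q (HH G B t (t+d))"
proof (induction d arbitrary: t B)
  case 0
  show ?case
    by (rule ville_base[OF sP sQ lvl_HH[OF Gl 0]]) (auto simp: HH_def intro: Gi)
next
  case (Suc d)
  let ?A = "B \<inter> {w. G w t}"
  let ?B = "B - {w. G w t}"
  have eq: "HH G B t (t + Suc d) = ?A \<union> HH G ?B (Suc t) (Suc t + d)"
    by (auto simp: HH_def) (metis le_antisym not_less_eq_eq, meson Suc_leD)
  have LA: "lvl t ?A" using Suc.prems Gl lvl_Int by blast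
  have LB: "lvl (Suc t) ?B" using Suc.prems Gl lvl_Diff lvl_mono le_SucI by blast
  have sA: "?A \<in> sets Seq" using lvl_sets[OF LA] .
  have sB: "HH G ?B (Suc t) (Suc t + d) \<in> sets Seq" using lvl_sets[OF lvl_HH[OF Gl LB]] by simp
  have dj: "?A \<inter> HH G ?B (Suc t) (Suc t + d) = {}" by (auto simp: HH_def)
  have "ennreal c * emeasure P (HH G B t (t + Suc d))
      = ennreal c * emeasure P ?A + ennreal c * emeasure P (HH G ?B (Suc t) (Suc t + d))"
    unfolding eq by (subst plus_emeasure[symmetric]) (use sA sB dj sP in \<open>auto simp: distrib_left\<close>)
  also have "\<dots> \<le> emeasure Q ?A + emeasure Q (HH G ?B (Suc t) (Suc t + d))"
    by (intro add_mono ville_base[OF sP sQ LA] Suc.IH[OF LB]) (auto intro: Gi)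
  also have "\<dots> = emeasure Q (HH G B t (t + Suc d))"
    unfolding eq by (subst plus_emeasure[symmetric]) (use sA sB dj sQ in auto)
  finally show ?case .
qed

lemma ville:
  assumes sP: "sets P = sets Seq" and sQ: "sets Q = sets Seq"
    and Gl: "\<And>s. lvl s {w. G w s}"
    and Gi: "\<And>w s. G w s \<Longrightarrow> ennreal c * emeasure P (cyl w s) \<le> emeasure Q (cyl w s)"
    and L: "lvl t B"
  shows "ennreal c * emeasure P {w\<in>B. \<exists>s\<ge>t. G w s} \<le> emeasure Q B"
proof -
  have U: "{w\<in>B. \<exists>s\<ge>t. G w s} = (\<Union>d. HH G B t (t+d))"
    by (auto simp: HH_def) (metis le_add_diff_inverse order_refl)
  have inc: "incseq (\<lambda>d. HH G B t (t+d))"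
    by (auto simp: incseq_def HH_def)
  have sets: "range (\<lambda>d. HH G B t (t+d)) \<subseteq> sets P"
    using lvl_sets[OF lvl_HH[OF Gl L]] sP by auto
  have "ennreal c * emeasure P {w\<in>B. \<exists>s\<ge>t. G w s} = (SUP d. ennreal c * emeasure P (HH G B t (t+d)))"
    unfolding U by (simp add: SUP_emeasure_incseq[OF sets inc, symmetric] SUP_mult_left_ennreal)
  also have "\<dots> \<le> emeasure Q B"
  proof (rule SUP_least)
    fix d
    have "ennreal c * emeasure P (HH G B t (t+d)) \<le> emeasure Q (HH G B t (t+d))"
      by (rule ville_fin[OF sP sQ Gl Gi L])
    also have "\<dots> \<le> emeasure Q B"
      by (rule emeasure_mono) (auto simp: HH_def sQ lvl_sets[OF L])
    finally show "ennreal c * emeasure P (HH G B t (t+d)) \<le> emeasure Q B" .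
  qed
  finally show ?thesis .
qed



definition sd :: "'a set \<Rightarrow> 'a set \<Rightarrow> 'a set" where "sd A B = (A - B) \<union> (B - A)"

definition apx :: "(nat \<Rightarrow> bool) measure \<Rightarrow> (nat \<Rightarrow> bool) measure \<Rightarrow> (nat \<Rightarrow> bool) set \<Rightarrow> bool" where
  "apx M N A \<longleftrightarrow> (\<forall>e>0. \<exists>t B. lvl t B \<and> measure M (sd A B) < e \<and> measure N (sd A B) < e)"

lemma lvl_UN_fin: "(\<And>i. i \<in> I \<Longrightarrow> lvl t (B i)) \<Longrightarrow> lvl t (\<Union>i\<in>I. B i)"
  unfolding lvl_def by blast

lemma sets_Seq_sigma: "sets Seq = sigma_sets UNIV (prod_algebra UNIV (\<lambda>_::nat. count_space (UNIV::bool set)))"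
  by (simp add: Seq_def sets_PiM)

lemma union_bound:
  fixes a :: "nat \<Rightarrow> (nat \<Rightarrow> bool) set"
  assumes fM: "finite_measure M" and sM: "sets M = sets Seq"
    and sa: "\<And>i. a i \<in> sets Seq" and sb: "\<And>i. b i \<in> sets Seq"
    and K: "K > 0"
    and h1: "measure M ((\<Union>i. a i) - (\<Union>i<K. a i)) < e/2"
    and h2: "\<And>i. i < K \<Longrightarrow> measure M (sd (a i) (b i)) < e / (2 * K)"
  shows "measure M (sd (\<Union>i. a i) (\<Union>i<K. b i)) < e"
proof -
  interpret finite_measure M by fact
  have sub: "sd (\<Union>i. a i) (\<Union>i<K. b i) \<subseteq> ((\<Union>i. a i) - (\<Union>i<K. a i)) \<union> (\<Union>i<K. sd (a i) (b i))"
    by (auto simp: sd_def)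
  have s1: "(\<Union>i. a i) - (\<Union>i<K. a i) \<in> sets M" using sa sM by auto
  have s2: "(\<Union>i<K. sd (a i) (b i)) \<in> sets M" using sa sb sM by (auto simp: sd_def)
  have "measure M (sd (\<Union>i. a i) (\<Union>i<K. b i)) \<le> measure M (((\<Union>i. a i) - (\<Union>i<K. a i)) \<union> (\<Union>i<K. sd (a i) (b i)))"
    by (rule finite_measure_mono[OF sub]) (use s1 s2 in auto)
  also have "\<dots> \<le> measure M ((\<Union>i. a i) - (\<Union>i<K. a i)) + measure M (\<Union>i<K. sd (a i) (b i))"
    by (rule measure_Un_le) (use s1 s2 in auto)
  also have "measure M (\<Union>i<K. sd (a i) (b i)) \<le> (\<Sum>i<K. measure M (sd (a i) (b i)))"
    by (rule finite_measure_subadditive_finite) (use sa sb sM in \<open>auto simp: sd_def\<close>)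
  also have "\<dots> < (\<Sum>i<K. e / (2 * K))"
    by (rule sum_strict_mono) (use K h2 in auto)
  also have "(\<Sum>i<K. e / (2 * K)) = e / 2" using K by simp
  finally show ?thesis using h1 by linarith
qed

lemma approx:
  assumes fM: "finite_measure M" and sM: "sets M = sets Seq"
    and fN: "finite_measure N" and sN: "sets N = sets Seq"
    and A: "A \<in> sets Seq"
  shows "apx M N A"
  using A unfolding sets_Seq_sigma
proof (induction rule: sigma_sets.induct)
  case (Basic a)
  then obtain J E where a: "a = prod_emb UNIV (\<lambda>_. count_space UNIV) J (Pi\<^sub>E J E)" and J: "finite J"
    by (auto elim!: prod_algebraE)
  obtain k where k: "J \<subseteq> {..<k}" using finite_nat_bounded[OF J] by blast
  have "lvl k a"
    unfolding lvl_def a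
  proof (intro allI impI)
    fix x y assume x: "x \<in> prod_emb UNIV (\<lambda>_. count_space UNIV) J (Pi\<^sub>E J E)" and ag: "agree x y k"
    have "\<forall>j\<in>J. x j = y j" using ag k by (auto simp: agree_def)
    then have "restrict y J = restrict x J" by (auto simp: restrict_def)
    then show "y \<in> prod_emb UNIV (\<lambda>_. count_space UNIV) J (Pi\<^sub>E J E)"
      using x by (simp add: prod_emb_iff)
  qed
  then show ?case unfolding apx_def
    by (intro allI impI exI[of _ k] exI[of _ a]) (auto simp: sd_def)
next
  case Empty
  then show ?case unfolding apx_def
    by (intro allI impI exI[of _ 0] exI[of _ "{}"]) (auto simp: sd_def lvl_empty)
next
  case (Compl a)
  show ?case unfolding apx_def
  proof (intro allI impI)
    fix e :: real assume e: "e > 0"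
    then obtain t B where B: "lvl t B" "measure M (sd a B) < e" "measure N (sd a B) < e"
      using Compl.IH unfolding apx_def by blast
    have "sd (UNIV - a) (UNIV - B) = sd a B" by (auto simp: sd_def)
    then show "\<exists>t B. lvl t B \<and> measure M (sd (UNIV - a) B) < e \<and> measure N (sd (UNIV - a) B) < e"
      using B lvl_Compl by metis
  qed
next
  case (Union a)
  have sa: "\<And>i. a i \<in> sets Seq" using Union.hyps unfolding sets_Seq_sigma .
  show ?case unfolding apx_def
  proof (intro allI impI)
    fix e :: real assume e: "e > 0"
    have inc: "incseq (\<lambda>K. \<Union>i<K. a i)"
      by (auto simp: incseq_def) (meson lessThan_iff order_less_le_trans)
    have rng: "range (\<lambda>K. \<Union>i<K. a i) \<subseteq> sets Seq" using sa by auto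
    have U: "(\<Union>K. \<Union>i<K. a i) = (\<Union>i. a i)" by blast
    have LM: "(\<lambda>K. measure M (\<Union>i<K. a i)) \<longlonglongrightarrow> measure M (\<Union>i. a i)"
      using finite_measure.finite_Lim_measure_incseq[OF fM, of "\<lambda>K. \<Union>i<K. a i"] inc rng sM U by simp
    have LN: "(\<lambda>K. measure N (\<Union>i<K. a i)) \<longlonglongrightarrow> measure N (\<Union>i. a i)"
      using finite_measure.finite_Lim_measure_incseq[OF fN, of "\<lambda>K. \<Union>i<K. a i"] inc rng sN U by simp
    have "\<forall>\<^sub>F K in sequentially. dist (measure M (\<Union>i<K. a i)) (measure M (\<Union>i. a i)) < e/2"
      using tendsto_iff[THEN iffD1, OF LM, rule_format, of "e/2"] e by simp
    moreover have "\<forall>\<^sub>F K in sequentially. dist (measure N (\<Union>i<K. a i)) (measure N (\<Union>i. a i)) < e/2"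
      using tendsto_iff[THEN iffD1, OF LN, rule_format, of "e/2"] e by simp
    moreover have "\<forall>\<^sub>F K in sequentially. K > (0::nat)"
      by (simp add: eventually_gt_at_top)
    ultimately have "\<forall>\<^sub>F K in sequentially. dist (measure M (\<Union>i<K. a i)) (measure M (\<Union>i. a i)) < e/2
       \<and> dist (measure N (\<Union>i<K. a i)) (measure N (\<Union>i. a i)) < e/2 \<and> K > 0"
      by (intro eventually_conj)
    then obtain K where K: "dist (measure M (\<Union>i<K. a i)) (measure M (\<Union>i. a i)) < e/2"
      "dist (measure N (\<Union>i<K. a i)) (measure N (\<Union>i. a i)) < e/2" "K > 0"
      unfolding eventually_sequentially by blast
    have DM: "measure M ((\<Union>i. a i) - (\<Union>i<K. a i)) = measure M (\<Union>i. a i) - measure M (\<Union>i<K. a i)"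
      using finite_measure.finite_measure_Diff[OF fM, of "\<Union>i. a i" "\<Union>i<K. a i"] sa sM by auto
    have dM: "measure M ((\<Union>i. a i) - (\<Union>i<K. a i)) < e/2"
      using K(1) DM abs_ge_minus_self[of "measure M (\<Union>i<K. a i) - measure M (\<Union>i. a i)"]
      unfolding dist_real_def by linarith
    have DN: "measure N ((\<Union>i. a i) - (\<Union>i<K. a i)) = measure N (\<Union>i. a i) - measure N (\<Union>i<K. a i)"
      using finite_measure.finite_measure_Diff[OF fN, of "\<Union>i. a i" "\<Union>i<K. a i"] sa sN by auto
    have dN: "measure N ((\<Union>i. a i) - (\<Union>i<K. a i)) < e/2"
      using K(2) DN abs_ge_minus_self[of "measure N (\<Union>i<K. a i) - measure N (\<Union>i. a i)"]
      unfolding dist_real_def by linarith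
    have e2: "e / (2 * K) > 0" using e K by simp
    have "\<forall>i. \<exists>tB. lvl (fst tB) (snd tB) \<and> measure M (sd (a i) (snd tB)) < e / (2 * K)
                    \<and> measure N (sd (a i) (snd tB)) < e / (2 * K)"
      using Union.IH e2 unfolding apx_def by fastforce
    then obtain tB where tB: "\<And>i. lvl (fst (tB i)) (snd (tB i))"
      "\<And>i. measure M (sd (a i) (snd (tB i))) < e / (2 * K)"
      "\<And>i. measure N (sd (a i) (snd (tB i))) < e / (2 * K)"
      by metis
    define T where "T = (\<Sum>i<K. fst (tB i))"
    have lT: "lvl T (\<Union>i<K. snd (tB i))"
    proof (rule lvl_UN_fin)
      fix i assume "i \<in> {..<K}"
      then have "fst (tB i) \<le> T" unfolding T_def by (intro member_le_sum) auto
      then show "lvl T (snd (tB i))" using lvl_mono tB(1) by blast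
    qed
    have sb: "\<And>i. snd (tB i) \<in> sets Seq" using tB(1) lvl_sets by blast
    show "\<exists>t B. lvl t B \<and> measure M (sd (\<Union> (range a)) B) < e \<and> measure N (sd (\<Union> (range a)) B) < e"
      using lT union_bound[OF fM sM sa sb K(3) dM tB(2)] union_bound[OF fN sN sa sb K(3) dN tB(3)]
      by blast
  qed
qed



lemma lvl_prod_emb:
  assumes J: "finite J"
  shows "\<exists>k. lvl k (prod_emb UNIV (\<lambda>_. count_space UNIV) J (Pi\<^sub>E J E))"
proof -
  obtain k where k: "J \<subseteq> {..<k}" using finite_nat_bounded[OF J] by blast
  have "lvl k (prod_emb UNIV (\<lambda>_. count_space UNIV) J (Pi\<^sub>E J E))"
    unfolding lvl_def
  proof (intro allI impI)
    fix x y assume x: "x \<in> prod_emb UNIV (\<lambda>_. count_space UNIV) J (Pi\<^sub>E J E)" and ag: "agree x y k"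
    have "\<forall>j\<in>J. x j = y j" using ag k by (auto simp: agree_def)
    then have "restrict y J = restrict x J" by (auto simp: restrict_def)
    then show "y \<in> prod_emb UNIV (\<lambda>_. count_space UNIV) J (Pi\<^sub>E J E)"
      using x by (simp add: prod_emb_iff)
  qed
  then show ?thesis ..
qed

lemma Seq_unique:
  assumes s1: "sets M1 = sets Seq" and s2: "sets M2 = sets Seq" and f1: "finite_measure M1"
    and eq: "\<And>w t. emeasure M1 (cyl w t) = emeasure M2 (cyl w t)"
  shows "M1 = M2"
proof (rule measure_eqI_PiM_infinite[where I=UNIV and M="\<lambda>_. count_space UNIV"])
  show "sets M1 = sets (PiM UNIV (\<lambda>_::nat. count_space (UNIV::bool set)))" using s1 by (simp add: Seq_def)
  show "sets M2 = sets (PiM UNIV (\<lambda>_::nat. count_space (UNIV::bool set)))" using s2 by (simp add: Seq_def)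
  show "finite_measure M1" by fact
  fix A :: "nat \<Rightarrow> bool set" and J :: "nat set" assume J: "finite J"
  obtain k where k: "lvl k (prod_emb UNIV (\<lambda>_. count_space UNIV) J (Pi\<^sub>E J A))"
    using lvl_prod_emb[OF J] by blast
  show "emeasure M1 (prod_emb UNIV (\<lambda>_. count_space UNIV) J (Pi\<^sub>E J A)) =
        emeasure M2 (prod_emb UNIV (\<lambda>_. count_space UNIV) J (Pi\<^sub>E J A))"
    by (simp add: lvl_sum[OF k s1] lvl_sum[OF k s2] eq)
qed

primrec Fz :: "((nat\<Rightarrow>bool) \<Rightarrow> nat \<Rightarrow> bool pmf) \<Rightarrow> (nat \<Rightarrow> real) \<Rightarrow> nat \<Rightarrow> (nat \<Rightarrow> bool)" where
  "Fz Q u 0 = (\<lambda>_. False)"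
| "Fz Q u (Suc n) = (Fz Q u n)(n := u n < pmf (Q (Fz Q u n) n) True)"

definition FF :: "((nat\<Rightarrow>bool) \<Rightarrow> nat \<Rightarrow> bool pmf) \<Rightarrow> (nat \<Rightarrow> real) \<Rightarrow> (nat \<Rightarrow> bool)" where
  "FF Q u = (\<lambda>n. Fz Q u (Suc n) n)"

lemma Fz_stable: "k < m \<Longrightarrow> m \<le> n \<Longrightarrow> Fz Q u n k = Fz Q u m k"
proof (induction n)
  case 0 then show ?case by simp
next
  case (Suc n)
  show ?case
  proof (cases "m \<le> n")
    case True
    then have "Fz Q u (Suc n) k = Fz Q u n k" using Suc.prems by simp
    then show ?thesis using Suc True by simp
  next
    case False
    then have "m = Suc n" using Suc.prems by simp
    then show ?thesis by simp
  qed
qed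

lemma FF_Fz: "k < n \<Longrightarrow> FF Q u k = Fz Q u n k"
  unfolding FF_def using Fz_stable[of k "Suc k" n] by simp

lemma FF_rec:
  assumes Qdep: "\<And>a b n. agree a b n \<Longrightarrow> Q a n = Q b n"
  shows "FF Q u n = (u n < pmf (Q (FF Q u) n) True)"
proof -
  have "agree (FF Q u) (Fz Q u n) n" using FF_Fz by (simp add: agree_def)
  then have "Q (FF Q u) n = Q (Fz Q u n) n" by (rule Qdep)
  then show ?thesis by (simp add: FF_def)
qed

lemma FF_cyl:
  fixes Q :: "(nat\<Rightarrow>bool) \<Rightarrow> nat \<Rightarrow> bool pmf" and u :: "nat \<Rightarrow> real" and w :: "nat \<Rightarrow> bool"
  assumes Qdep: "\<And>a b n. agree a b n \<Longrightarrow> Q a n = Q b n"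
  shows "(\<forall>n<t. FF Q u n = w n) \<longleftrightarrow> (\<forall>n<t. (u n < pmf (Q w n) True) = w n)"
proof (induction t)
  case 0 then show ?case by simp
next
  case (Suc t)
  have "(\<forall>n<Suc t. FF Q u n = w n) \<longleftrightarrow> (\<forall>n<t. FF Q u n = w n) \<and> FF Q u t = w t"
    by (auto simp: less_Suc_eq)
  also have "\<dots> \<longleftrightarrow> (\<forall>n<t. (u n < pmf (Q w n) True) = w n) \<and> (u t < pmf (Q w t) True) = w t"
  proof -
    have "(\<forall>n<t. FF Q u n = w n) \<Longrightarrow> Q (FF Q u) t = Q w t" by (intro Qdep) (simp add: agree_def)
    then show ?thesis using Suc FF_rec[OF Qdep, where u=u and n=t] by auto
  qed
  also have "\<dots> \<longleftrightarrow> (\<forall>n<Suc t. (u n < pmf (Q w n) True) = w n)"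
    by (auto simp: less_Suc_eq)
  finally show ?case .
qed

definition UU :: "real measure" where "UU = uniform_measure lborel {0..1}"
definition UM :: "(nat \<Rightarrow> real) measure" where "UM = PiM UNIV (\<lambda>_. UU)"

lemma prob_UU: "prob_space UU"
  unfolding UU_def by (rule prob_space_uniform_measure) auto

lemma space_UM[simp]: "space UM = UNIV"
  by (simp add: UM_def UU_def space_PiM)

lemma sets_UU[simp]: "sets UU = sets borel"
  by (simp add: UU_def)

lemma half_sets: "{x::real. (x < q) = b} \<in> sets UU"
  by (cases b) auto

lemma FF_pre:
  assumes Qdep: "\<And>a b n. agree a b n \<Longrightarrow> Q a n = Q b n"
  shows "FF Q -` cyl w t \<inter> space UM =
    prod_emb UNIV (\<lambda>_. UU) {..<t} (Pi\<^sub>E {..<t} (\<lambda>n. {x. (x < pmf (Q w n) True) = w n}))"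
  using FF_cyl[OF Qdep] by (auto simp: cyl_def prod_emb_iff UU_def)

lemma FF_pre_sets:
  assumes Qdep: "\<And>a b n. agree a b n \<Longrightarrow> Q a n = Q b n"
  shows "FF Q -` cyl w t \<inter> space UM \<in> sets UM"
proof -
  have "prod_emb UNIV (\<lambda>_. UU) {..<t} (Pi\<^sub>E {..<t} (\<lambda>n. {x. (x < pmf (Q w n) True) = w n})) \<in> sets UM"
    unfolding UM_def by (rule sets_PiM_I) (auto simp: half_sets)
  then show ?thesis using FF_pre[OF Qdep, where w=w and t=t] by simp
qed

lemma FF_meas:
  assumes Qdep: "\<And>a b n. agree a b n \<Longrightarrow> Q a n = Q b n"
  shows "FF Q \<in> measurable UM Seq"
  unfolding Seq_def
proof (rule measurable_PiM_single')
  fix i :: nat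
  show "(\<lambda>u. FF Q u i) \<in> measurable UM (count_space UNIV)"
    unfolding measurable_count_space_eq2_countable
  proof (intro conjI ballI)
    fix b :: bool
    have L: "lvl (Suc i) {w. w i = b}" by (auto simp: lvl_def agree_def)
    have "(\<lambda>u. FF Q u i) -` {b} \<inter> space UM = FF Q -` {w. w i = b} \<inter> space UM" by auto
    also have "\<dots> = (\<Union>w\<in>reps (Suc i) {w. w i = b}. FF Q -` cyl w (Suc i) \<inter> space UM)"
      by (subst reps_Union[OF L]) auto
    also have "\<dots> \<in> sets UM"
      by (intro sets.finite_UN reps_finite FF_pre_sets[OF Qdep])
    finally show "(\<lambda>u. FF Q u i) -` {b} \<inter> space UM \<in> sets UM" .
  qed auto
qed auto

lemma UU_half: "q \<ge> 0 \<Longrightarrow> q \<le> 1 \<Longrightarrow> emeasure UU {x. (x < q) = b} = ennreal (if b then q else 1 - q)"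
proof -
  assume q: "q \<ge> 0" "q \<le> 1"
  have "emeasure UU {x. (x < q) = b} = emeasure lborel ({0..1} \<inter> {x. (x < q) = b}) / emeasure lborel {0..1::real}"
    unfolding UU_def by (rule emeasure_uniform_measure) (auto simp: half_sets[unfolded sets_UU])
  also have "\<dots> = emeasure lborel ({0..1} \<inter> {x. (x < q) = b})" by (simp add: divide_ennreal_def)
  also have "\<dots> = ennreal (if b then q else 1 - q)"
  proof (cases b)
    case True
    then have "{0..1} \<inter> {x. (x < q) = b} = {0..<q}" using q by auto
    then show ?thesis using True q by simp
  next
    case False
    then have "{0..1} \<inter> {x. (x < q) = b} = {q..1}" using q by auto
    then show ?thesis using False q by simp
  qed
  finally show ?thesis .
qed

lemma construct:
  assumes Qdep: "\<And>a b n. agree a b n \<Longrightarrow> Q a n = Q b n"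
  shows "\<exists>M. sets M = sets Seq \<and> prob_space M \<and>
     (\<forall>w t. emeasure M (cyl w t) = ennreal (\<Prod>n<t. pmf (Q w n) (w n)))"
proof (intro exI conjI allI)
  let ?M = "distr UM Seq (FF Q)"
  show "sets ?M = sets Seq" by simp
  have pUM: "prob_space UM" unfolding UM_def by (rule prob_space_PiM) (rule prob_UU)
  show "prob_space ?M" by (rule prob_space.prob_space_distr[OF pUM FF_meas[OF Qdep]])
  fix w t
  have "emeasure ?M (cyl w t) = emeasure UM (FF Q -` cyl w t \<inter> space UM)"
    by (rule emeasure_distr[OF FF_meas[OF Qdep] cyl_sets])
  also have "\<dots> = emeasure UM (prod_emb UNIV (\<lambda>_. UU) {..<t} (Pi\<^sub>E {..<t} (\<lambda>n. {x. (x < pmf (Q w n) True) = w n})))"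
    using FF_pre[OF Qdep, where w=w and t=t] by simp
  also have "\<dots> = (\<Prod>n<t. emeasure UU {x. (x < pmf (Q w n) True) = w n})"
    unfolding UM_def
    by (rule emeasure_PiM_emb) (auto simp: prob_UU half_sets)
  also have "\<dots> = (\<Prod>n<t. ennreal (pmf (Q w n) (w n)))"
    by (intro prod.cong refl) (simp add: UU_half pmf_le_1 pmf_False_conv_True)
  also have "\<dots> = ennreal (\<Prod>n<t. pmf (Q w n) (w n))"
    by (simp add: prod_ennreal)
  finally show "emeasure ?M (cyl w t) = ennreal (\<Prod>n<t. pmf (Q w n) (w n))" .
qed



lemma hist_dep: "agree a b n \<Longrightarrow> hist f0 f1 a n = hist f0 f1 b n"
proof (induction n)
  case 0 then show ?case by simp
next
  case (Suc n)
  then have "agree a b n" "a n = b n" by (auto simp: agree_def)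
  with Suc show ?case by simp
qed

definition pp :: "strategy \<Rightarrow> strategy \<Rightarrow> nat \<Rightarrow> (nat \<Rightarrow> bool) \<Rightarrow> nat \<Rightarrow> real" where
  "pp f0 f1 i w t = (\<Prod>n<t. pmf (sel f0 f1 i (hist f0 f1 w n)) (w n))"

lemma pp_nonneg: "pp f0 f1 i w t \<ge> 0"
  by (simp add: pp_def prod_nonneg)

lemma pp_dep: "agree a b t \<Longrightarrow> pp f0 f1 i a t = pp f0 f1 i b t"
  unfolding pp_def
  by (intro prod.cong refl) (auto simp: agree_def intro!: arg_cong2[where f=pmf] arg_cong[where f="sel f0 f1 i"] hist_dep)

lemma Pf_char:
  shows "sets (Pf f0 f1 i) = sets Seq \<and> prob_space (Pf f0 f1 i) \<and>
     (\<forall>w t. emeasure (Pf f0 f1 i) (cyl w t) = ennreal (pp f0 f1 i w t))"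
proof -
  let ?Q = "\<lambda>w n. sel f0 f1 i (hist f0 f1 w n)"
  have Qdep: "\<And>a b n. agree a b n \<Longrightarrow> ?Q a n = ?Q b n" using hist_dep by metis
  obtain M where M: "sets M = sets Seq" "prob_space M"
    "\<forall>w t. emeasure M (cyl w t) = ennreal (\<Prod>n<t. pmf (?Q w n) (w n))"
    using construct[of "\<lambda>w n. sel f0 f1 i (hist f0 f1 w n)", OF Qdep] by blast
  let ?P = "\<lambda>M. sets M = sets Seq \<and> prob_space M \<and>
     (\<forall>w t. emeasure M (cyl w t) = ennreal (\<Prod>n<t. pmf (sel f0 f1 i (hist f0 f1 w n)) (w n)))"
  have ex1: "\<exists>!M. ?P M"
  proof (rule ex1I[of _ M])
    show "?P M" using M by blast
    fix M' assume "?P M'"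
    then show "M' = M"
      using M by (intro Seq_unique) (auto simp: prob_space_def)
  qed
  have "Pf f0 f1 i = M" unfolding Pf_def
    by (rule the1_equality[OF ex1]) (use M in blast)
  then show ?thesis using M by (simp add: pp_def)
qed

lemma Pf_sets[simp]: "sets (Pf f0 f1 i) = sets Seq" using Pf_char by blast
lemma Pf_prob: "prob_space (Pf f0 f1 i)" using Pf_char by blast
lemma Pf_cyl: "emeasure (Pf f0 f1 i) (cyl w t) = ennreal (pp f0 f1 i w t)" using Pf_char by blast
lemma Pf_finite: "finite_measure (Pf f0 f1 i)" using Pf_prob by (simp add: prob_space_def)

lemma Dt_eq: "Dt f0 f1 j k w t = pp f0 f1 k w t / pp f0 f1 j w t"
  by (simp add: Dt_def pp_def prod_dividef)

definition pos :: "strategy \<Rightarrow> strategy \<Rightarrow> nat \<Rightarrow> (nat \<Rightarrow> bool) \<Rightarrow> bool" where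
  "pos f0 f1 i w \<longleftrightarrow> (\<forall>n. pmf (sel f0 f1 i (hist f0 f1 w n)) (w n) > 0)"

lemma pos_pp: "pos f0 f1 i w \<Longrightarrow> pp f0 f1 i w t > 0"
  by (simp add: pos_def pp_def prod_pos)

lemma null_lvl:
  assumes "sets M = sets Seq" "lvl t E" "\<And>a. a \<in> E \<Longrightarrow> emeasure M (cyl a t) = 0"
  shows "emeasure M E = 0"
  using lvl_sum[OF assms(2,1)] assms(3) reps_sub by (simp add: subset_iff)

lemma NP_sets: "{w. \<not> pos f0 f1 i w} \<in> sets Seq"
  and NP_null: "emeasure (Pf f0 f1 i) {w. \<not> pos f0 f1 i w} = 0"
proof -
  define E where "E n = {w. pmf (sel f0 f1 i (hist f0 f1 w n)) (w n) = 0}" for n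
  have U: "{w. \<not> pos f0 f1 i w} = (\<Union>n. E n)"
    by (auto simp: pos_def E_def) (metis pmf_nonneg order_le_less, metis less_irrefl)
  have L: "lvl (Suc n) (E n)" for n
    unfolding lvl_def E_def
  proof (intro allI impI)
    fix a b assume a: "a \<in> {w. pmf (sel f0 f1 i (hist f0 f1 w n)) (w n) = 0}" and ag: "agree a b (Suc n)"
    have "hist f0 f1 a n = hist f0 f1 b n" by (rule hist_dep) (use ag in \<open>auto simp: agree_def\<close>)
    moreover have "a n = b n" using ag by (auto simp: agree_def)
    ultimately show "b \<in> {w. pmf (sel f0 f1 i (hist f0 f1 w n)) (w n) = 0}" using a by simp
  qed
  have sE: "E n \<in> sets Seq" for n using lvl_sets[OF L] .
  show "{w. \<not> pos f0 f1 i w} \<in> sets Seq" unfolding U using sE by auto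
  have "emeasure (Pf f0 f1 i) (E n) = 0" for n
  proof (rule null_lvl[OF Pf_sets L])
    fix a assume "a \<in> E n"
    then have "pp f0 f1 i a (Suc n) = 0" unfolding pp_def E_def
      by (intro prod_zero) auto
    then show "emeasure (Pf f0 f1 i) (cyl a (Suc n)) = 0" by (simp add: Pf_cyl)
  qed
  then show "emeasure (Pf f0 f1 i) {w. \<not> pos f0 f1 i w} = 0"
    unfolding U by (intro emeasure_UN_eq_0) (use sE in auto)
qed

lemma ennreal_small:
  fixes x :: ennreal
  assumes "\<And>M::nat. ennreal (real (Suc M)) * x \<le> 1"
  shows "x = 0"
proof -
  have "x \<le> 1" using assms[of 0] by simp
  then obtain r where r: "x = ennreal r" "r \<ge> 0" by (cases x rule: ennreal_cases) (auto simp: top_unique)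
  have b: "real (Suc M) * r \<le> 1" for M
    using assms[of M] r by (simp add: ennreal_mult[symmetric] del: of_nat_Suc)
  show ?thesis
  proof (rule ccontr)
    assume "x \<noteq> 0"
    then have "r > 0" using r by auto
    then obtain M where "inverse (real (Suc M)) < r" using reals_Archimedean by blast
    then have "1 < real (Suc M) * r"
      by (metis inverse_positive_iff_positive mult.commute of_nat_0_less_iff pos_divide_less_eq
          zero_less_Suc inverse_eq_divide)
    then show False using b[of M] by simp
  qed
qed



lemma Pf_space[simp]: "space (Pf f0 f1 i) = UNIV"
  using sets_eq_imp_space_eq[OF Pf_sets[of f0 f1 i]] by simp

lemma pp_lvl: "lvl s {w. c * pp f0 f1 a w s \<le> pp f0 f1 b w s}"
  unfolding lvl_def using pp_dep by (metis mem_Collect_eq)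

lemma KK_sets: "(\<Inter>M::nat. {w. \<exists>s. real (Suc M) * pp f0 f1 a w s \<le> pp f0 f1 b w s}) \<in> sets Seq"
proof -
  have "{w. \<exists>s. real (Suc M) * pp f0 f1 a w s \<le> pp f0 f1 b w s} =
        (\<Union>s. {w. real (Suc M) * pp f0 f1 a w s \<le> pp f0 f1 b w s})" for M by blast
  then show ?thesis using lvl_sets[OF pp_lvl] by (auto intro!: sets.countable_INT)
qed

lemma ville_null:
  "emeasure (Pf f0 f1 a) (\<Inter>M::nat. {w. \<exists>s. real (Suc M) * pp f0 f1 a w s \<le> pp f0 f1 b w s}) = 0"
proof (rule ennreal_small)
  fix M :: nat
  let ?K = "\<Inter>M::nat. {w. \<exists>s. real (Suc M) * pp f0 f1 a w s \<le> pp f0 f1 b w s}"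
  let ?S = "{w\<in>UNIV. \<exists>s\<ge>0. real (Suc M) * pp f0 f1 a w s \<le> pp f0 f1 b w s}"
  have SS: "?S \<in> sets Seq"
  proof -
    have "?S = (\<Union>s. {w. real (Suc M) * pp f0 f1 a w s \<le> pp f0 f1 b w s})" by blast
    then show ?thesis using lvl_sets[OF pp_lvl] by auto
  qed
  have "ennreal (real (Suc M)) * emeasure (Pf f0 f1 a) ?S \<le> emeasure (Pf f0 f1 b) UNIV"
  proof (rule ville[OF Pf_sets Pf_sets pp_lvl _ lvl_UNIV])
    fix w s assume "real (Suc M) * pp f0 f1 a w s \<le> pp f0 f1 b w s"
    then show "ennreal (real (Suc M)) * emeasure (Pf f0 f1 a) (cyl w s) \<le> emeasure (Pf f0 f1 b) (cyl w s)"
      by (simp add: Pf_cyl ennreal_mult[symmetric] pp_nonneg del: of_nat_Suc)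
  qed
  also have "emeasure (Pf f0 f1 b) UNIV = 1"
    using prob_space.emeasure_space_1[OF Pf_prob[of f0 f1 b]] by simp
  finally have "ennreal (real (Suc M)) * emeasure (Pf f0 f1 a) ?S \<le> 1" .
  moreover have "emeasure (Pf f0 f1 a) ?K \<le> emeasure (Pf f0 f1 a) ?S"
    by (rule emeasure_mono) (use SS in auto)
  ultimately show "ennreal (real (Suc M)) * emeasure (Pf f0 f1 a) ?K \<le> 1"
    by (meson mult_left_mono order_trans zero_le)
qed

lemma derivK:
  assumes "deriv_is f0 f1 a b w 0"
  shows "\<exists>s. real (Suc M) * pp f0 f1 b w s \<le> pp f0 f1 a w s"
proof -
  have P: "pos f0 f1 a w"
    using assms unfolding deriv_is_def upperD_def pos_def by (auto split: if_splits)
  then have LL: "limsup (\<lambda>t. ereal (Dt f0 f1 a b w t)) = ereal 0" "liminf (\<lambda>t. ereal (Dt f0 f1 a b w t)) = ereal 0"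
    using assms unfolding deriv_is_def upperD_def lowerD_def pos_def by (auto simp: zero_ereal_def)
  have "(\<lambda>t. ereal (Dt f0 f1 a b w t)) \<longlonglongrightarrow> ereal 0"
    by (subst tendsto_iff_Liminf_eq_Limsup) (use LL in auto)
  then have "Dt f0 f1 a b w \<longlonglongrightarrow> 0" by (simp only: lim_ereal)
  then have "\<forall>\<^sub>F t in sequentially. Dt f0 f1 a b w t < inverse (real (Suc M))"
    by (rule order_tendstoD) simp
  then obtain s where s: "Dt f0 f1 a b w s < inverse (real (Suc M))"
    by (auto simp: eventually_sequentially)
  have pa: "pp f0 f1 a w s > 0" using pos_pp[OF P] .
  have "pp f0 f1 b w s / pp f0 f1 a w s < inverse (real (Suc M))" using s by (simp add: Dt_eq)
  then have "pp f0 f1 b w s < pp f0 f1 a w s / real (Suc M)" using pa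
    by (simp add: divide_less_eq inverse_eq_divide mult.commute)
  then have "real (Suc M) * pp f0 f1 b w s < pp f0 f1 a w s"
    by (simp add: less_divide_eq mult.commute del: of_nat_Suc)
  then show ?thesis by (intro exI[of _ s]) simp
qed

lemma deriv_from_small:
  assumes P: "pos f0 f1 a w"
    and sm: "\<And>k::nat. \<exists>n. \<forall>s\<ge>n. pp f0 f1 b w s < inverse (real (Suc k)) * pp f0 f1 a w s"
  shows "deriv_is f0 f1 a b w 0"
proof -
  have L: "Dt f0 f1 a b w \<longlonglongrightarrow> 0"
  proof (rule LIMSEQ_I)
    fix r :: real assume r: "r > 0"
    obtain k where k: "inverse (real (Suc k)) < r" using reals_Archimedean[OF r] by auto
    obtain n where n: "\<forall>s\<ge>n. pp f0 f1 b w s < inverse (real (Suc k)) * pp f0 f1 a w s" using sm by blast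
    show "\<exists>no. \<forall>s\<ge>no. norm (Dt f0 f1 a b w s - 0) < r"
    proof (intro exI allI impI)
      fix s assume "n \<le> s"
      then have lt: "pp f0 f1 b w s < inverse (real (Suc k)) * pp f0 f1 a w s" using n by blast
      have pa: "pp f0 f1 a w s > 0" using pos_pp[OF P] .
      have "pp f0 f1 b w s / pp f0 f1 a w s < inverse (real (Suc k))"
        using lt pa by (simp add: divide_less_eq)
      moreover have "pp f0 f1 b w s / pp f0 f1 a w s \<ge> 0" using pp_nonneg pa by simp
      ultimately show "norm (Dt f0 f1 a b w s - 0) < r" using k by (simp add: Dt_eq)
    qed
  qed
  then have L': "(\<lambda>t. ereal (Dt f0 f1 a b w t)) \<longlonglongrightarrow> 0"
    by (simp add: lim_ereal zero_ereal_def)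
  have "limsup (\<lambda>t. ereal (Dt f0 f1 a b w t)) = 0" by (rule lim_imp_Limsup[OF _ L']) simp
  moreover have "liminf (\<lambda>t. ereal (Dt f0 f1 a b w t)) = 0" by (rule lim_imp_Liminf[OF _ L']) simp
  ultimately show ?thesis
    using P unfolding deriv_is_def upperD_def lowerD_def pos_def by (simp add: zero_ereal_def)
qed



lemma T_sets:
  assumes "comparison_test T"
  shows "{w. T w f0 f1 = c} \<in> sets Seq"
proof -
  have Tm: "(\<lambda>w. T w f0 f1) \<in> borel_measurable Seq" using assms by (simp add: comparison_test_def)
  have "(\<lambda>w. T w f0 f1) -` {c} \<inter> space Seq \<in> sets Seq" by (rule measurable_sets[OF Tm]) simp
  then show ?thesis by (simp add: vimage_def)
qed

lemma Bad_null:
  assumes sA: "A \<in> sets Seq" and RA: "emeasure (Pf f0 f1 j) A = 0"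
  shows "emeasure (Pf f0 f1 i) (A \<inter> {w. \<forall>n. \<exists>s\<ge>n. inverse (real (Suc k)) * pp f0 f1 i w s \<le> pp f0 f1 j w s}) = 0"
    (is "emeasure ?P (A \<inter> ?Bad) = 0")
proof -
  let ?R = "Pf f0 f1 j"
  define d where "d = inverse (real (Suc k))"
  have d: "d > 0" by (simp add: d_def)
  interpret P: finite_measure ?P by (rule Pf_finite)
  interpret R: finite_measure ?R by (rule Pf_finite)
  have sBad: "?Bad \<in> sets Seq"
  proof -
    have "?Bad = (\<Inter>n. \<Union>s\<in>{n..}. {w. inverse (real (Suc k)) * pp f0 f1 i w s \<le> pp f0 f1 j w s})"
      by auto
    then show ?thesis using lvl_sets[OF pp_lvl] by auto
  qed
  have RA': "measure ?R A = 0" using RA by (simp add: measure_def)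
  have bound: "measure ?P (A \<inter> ?Bad) \<le> e * (2 + real k)" if e: "e > 0" for e
  proof -
    obtain t B where B: "lvl t B" "measure ?P (sd A B) < e" "measure ?R (sd A B) < e"
      using approx[OF Pf_finite Pf_sets Pf_finite Pf_sets sA] e unfolding apx_def by blast
    have sB: "B \<in> sets Seq" using lvl_sets[OF B(1)] .
    have ssd: "sd A B \<in> sets Seq" using sA sB by (auto simp: sd_def)
    define H where "H = {w\<in>B. \<exists>s\<ge>t. d * pp f0 f1 i w s \<le> pp f0 f1 j w s}"
    have sH: "H \<in> sets Seq"
    proof -
      have "H = B \<inter> (\<Union>s\<in>{t..}. {w. d * pp f0 f1 i w s \<le> pp f0 f1 j w s})"
        unfolding H_def by auto
      then show ?thesis using lvl_sets[OF pp_lvl] sB by auto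
    qed
    have V: "ennreal d * emeasure ?P H \<le> emeasure ?R B"
    unfolding H_def proof (rule ville[OF Pf_sets Pf_sets pp_lvl _ B(1)])
      fix w s assume "d * pp f0 f1 i w s \<le> pp f0 f1 j w s"
      then show "ennreal d * emeasure ?P (cyl w s) \<le> emeasure ?R (cyl w s)"
        using d by (simp add: Pf_cyl ennreal_mult[symmetric] pp_nonneg)
    qed
    then have "ennreal (d * measure ?P H) \<le> ennreal (measure ?R B)"
      using d by (simp add: P.emeasure_eq_measure R.emeasure_eq_measure ennreal_mult)
    then have V': "d * measure ?P H \<le> measure ?R B" by (simp add: ennreal_le_iff)
    have "measure ?R B \<le> measure ?R (sd A B \<union> A)"
      by (rule R.finite_measure_mono) (use sA ssd in \<open>auto simp: sd_def\<close>)
    also have "\<dots> \<le> measure ?R (sd A B) + measure ?R A"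
      by (rule measure_Un_le) (use sA ssd in auto)
    finally have "d * measure ?P H < e" using V' B(3) RA' by linarith
    then have mH: "measure ?P H < e * real (Suc k)"
      using d by (simp add: d_def field_simps)
    have "A \<inter> ?Bad \<subseteq> sd A B \<union> H"
    proof
      fix w assume w: "w \<in> A \<inter> ?Bad"
      show "w \<in> sd A B \<union> H"
      proof (cases "w \<in> B")
        case True
        from w obtain s where "s \<ge> t" "inverse (real (Suc k)) * pp f0 f1 i w s \<le> pp f0 f1 j w s" by blast
        then show ?thesis using True unfolding d_def H_def by blast
      next
        case False
        then show ?thesis using w by (simp add: sd_def)
      qed
    qed
    moreover have "sd A B \<union> H \<in> sets ?P" using ssd sH by simp
    ultimately have "measure ?P (A \<inter> ?Bad) \<le> measure ?P (sd A B \<union> H)"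
      by (rule P.finite_measure_mono)
    also have "\<dots> \<le> measure ?P (sd A B) + measure ?P H"
      by (rule measure_Un_le) (simp_all add: ssd sH)
    finally show ?thesis using B(2) mH by (simp add: field_simps)
  qed
  have "measure ?P (A \<inter> ?Bad) = 0"
  proof (rule ccontr)
    assume ne: "measure ?P (A \<inter> ?Bad) \<noteq> 0"
    let ?m = "measure ?P (A \<inter> ?Bad)"
    have m: "?m > 0" using ne measure_nonneg[of ?P "A \<inter> ?Bad"] by linarith
    have "?m \<le> (?m / (4 + 2 * real k)) * (2 + real k)"
      by (rule bound) (use m in simp)
    also have "\<dots> = ?m / 2" by (simp add: field_simps)
    finally show False using m by simp
  qed
  then show ?thesis by (simp add: P.emeasure_eq_measure)
qed



lemma main_equiv:
  assumes CT: "comparison_test T" and EF: "error_free T" and RS: "reasonable T"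
  shows "test_equiv T derivTest"
  unfolding test_equiv_def
proof (intro allI impI)
  fix f0 f1 :: strategy and i :: nat
  assume i1: "i \<le> 1"
  define j where "j = 1 - i"
  have ji: "1 - j = i" "j \<le> 1" using i1 by (auto simp: j_def)
  let ?P = "Pf f0 f1 i"
  let ?R = "Pf f0 f1 j"
  define A where "A = {w. T w f0 f1 = real i}"
  have sA: "A \<in> sets Seq" unfolding A_def by (rule T_sets[OF CT])
  have RA: "emeasure ?R A = 0"
  proof -
    have "emeasure (Pf f0 f1 (1 - i)) {w \<in> space Seq. T w f0 f1 = real i} = 0"
      using EF i1 unfolding error_free_def by blast
    then show ?thesis by (simp add: A_def j_def)
  qed
  define E3 where "E3 = {w. T w f0 f1 = real j}"
  have sE3: "E3 \<in> sets Seq" unfolding E3_def by (rule T_sets[OF CT])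
  have PE3: "emeasure ?P E3 = 0"
  proof -
    have "emeasure (Pf f0 f1 (1 - j)) {w \<in> space Seq. T w f0 f1 = real j} = 0"
      using EF ji(2) unfolding error_free_def by blast
    then show ?thesis unfolding ji(1) E3_def by simp
  qed
  define Bad where "Bad k = {w. \<forall>n. \<exists>s\<ge>n. inverse (real (Suc k)) * pp f0 f1 i w s \<le> pp f0 f1 j w s}" for k
  have sBad: "Bad k \<in> sets Seq" for k
  proof -
    have "Bad k = (\<Inter>n. \<Union>s\<in>{n..}. {w. inverse (real (Suc k)) * pp f0 f1 i w s \<le> pp f0 f1 j w s})"
      unfolding Bad_def by auto
    then show ?thesis using lvl_sets[OF pp_lvl] by auto
  qed
  define N where "N = {w. \<not> pos f0 f1 i w} \<union> (\<Union>k. A \<inter> Bad k)"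
  have sN: "N \<in> sets Seq" unfolding N_def using NP_sets sA sBad by auto
  have PN: "emeasure ?P N = 0"
  proof -
    have "emeasure ?P (\<Union>k. A \<inter> Bad k) = 0"
      by (rule emeasure_UN_eq_0) (use Bad_null[OF sA RA] sA sBad in \<open>auto simp: Bad_def\<close>)
    moreover have "emeasure ?P N \<le> emeasure ?P {w. \<not> pos f0 f1 i w} + emeasure ?P (\<Union>k. A \<inter> Bad k)"
      unfolding N_def by (rule emeasure_subadditive) (use NP_sets sA sBad in auto)
    ultimately show ?thesis using NP_null by simp
  qed
  define K2 where "K2 = (\<Inter>M::nat. {w. \<exists>s. real (Suc M) * pp f0 f1 i w s \<le> pp f0 f1 j w s})"
  have sK2: "K2 \<in> sets Seq" unfolding K2_def by (rule KK_sets)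
  have PK2: "emeasure ?P K2 = 0" unfolding K2_def by (rule ville_null)
  define K3 where "K3 = (\<Inter>M::nat. {w. \<exists>s. real (Suc M) * pp f0 f1 j w s \<le> pp f0 f1 i w s})"
  have sK3: "K3 \<in> sets Seq" unfolding K3_def by (rule KK_sets)
  have RK3: "emeasure ?R K3 = 0" unfolding K3_def by (rule ville_null)
  define B5 where "B5 = K3 \<inter> {w. T w f0 f1 \<noteq> real i}"
  have sB5: "B5 \<in> sets Seq"
  proof -
    have "{w. T w f0 f1 \<noteq> real i} = UNIV - A" unfolding A_def by auto
    then show ?thesis unfolding B5_def using sK3 sA by auto
  qed
  have RB5: "emeasure ?R B5 = 0"
  proof -
    have "emeasure ?R B5 \<le> emeasure ?R K3" by (rule emeasure_mono) (use sK3 in \<open>auto simp: B5_def\<close>)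
    then show ?thesis using RK3 by simp
  qed
  have PB5: "emeasure ?P B5 = 0"
  proof (rule ccontr)
    assume "emeasure ?P B5 \<noteq> 0"
    then have "emeasure ?P B5 > 0" by (simp add: zero_less_iff_neq_zero)
    then have "emeasure ?P (B5 \<inter> {w \<in> space Seq. T w f0 f1 = real i}) > 0"
      using RS i1 sB5 RB5 unfolding reasonable_def j_def by blast
    moreover have "B5 \<inter> {w \<in> space Seq. T w f0 f1 = real i} = {}" by (auto simp: B5_def)
    ultimately show False by simp
  qed
  have sub: "{w \<in> space Seq. T w f0 f1 \<noteq> derivTest w f0 f1} \<subseteq> N \<union> K2 \<union> E3 \<union> B5"
  proof
    fix w assume w: "w \<in> {w \<in> space Seq. T w f0 f1 \<noteq> derivTest w f0 f1}"
    show "w \<in> N \<union> K2 \<union> E3 \<union> B5"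
    proof (rule ccontr)
      assume nw: "w \<notin> N \<union> K2 \<union> E3 \<union> B5"
      have posi: "pos f0 f1 i w" using nw by (auto simp: N_def)
      have nji: "\<not> deriv_is f0 f1 j i w 0"
      proof
        assume "deriv_is f0 f1 j i w 0"
        then have "w \<in> K2" unfolding K2_def using derivK by blast
        then show False using nw by blast
      qed
      have Tv: "T w f0 f1 \<in> {0, 1/2, 1}" using CT by (simp add: comparison_test_def)
      have Tj: "T w f0 f1 \<noteq> real j" using nw by (auto simp: E3_def)
      show False
      proof (cases "T w f0 f1 = real i")
        case True
        then have wA: "w \<in> A" by (simp add: A_def)
        have "\<And>k. w \<notin> Bad k" using nw wA by (auto simp: N_def)
        then have sm: "\<And>k::nat. \<exists>n. \<forall>s\<ge>n. pp f0 f1 j w s < inverse (real (Suc k)) * pp f0 f1 i w s"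
          unfolding Bad_def by (auto simp: not_le) (meson not_le)
        have dij: "deriv_is f0 f1 i j w 0" by (rule deriv_from_small[OF posi sm])
        show False
        proof (cases "i = 0")
          case True
          then have "j = 1" by (simp add: j_def)
          then have "derivTest w f0 f1 = 0" using nji dij True by (simp add: derivTest_def)
          then show False using w \<open>T w f0 f1 = real i\<close> True by simp
        next
          case False
          then have "i = 1" "j = 0" using i1 by (auto simp: j_def)
          then have "derivTest w f0 f1 = 1" using dij by (simp add: derivTest_def)
          then show False using w \<open>T w f0 f1 = real i\<close> \<open>i = 1\<close> by simp
        qed
      next
        case False
        have "i = 0 \<and> j = 1 \<or> i = 1 \<and> j = 0" using i1 by (auto simp: j_def)
        then have Th: "T w f0 f1 = 1/2" using Tv Tj False by auto
        have "w \<notin> B5" using nw by blast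
        then have "w \<notin> K3" using False by (simp add: B5_def)
        then have nij: "\<not> deriv_is f0 f1 i j w 0" unfolding K3_def using derivK by blast
        have "derivTest w f0 f1 = 1/2"
          using nij nji \<open>i = 0 \<and> j = 1 \<or> i = 1 \<and> j = 0\<close> by (auto simp: derivTest_def)
        then show False using w Th by simp
      qed
    qed
  qed
  have "emeasure ?P (N \<union> K2 \<union> E3 \<union> B5) \<le> emeasure ?P (N \<union> K2 \<union> E3) + emeasure ?P B5"
    by (rule emeasure_subadditive) (use sN sK2 sE3 sB5 in auto)
  also have "\<dots> \<le> emeasure ?P (N \<union> K2) + emeasure ?P E3 + emeasure ?P B5"
    by (intro add_right_mono emeasure_subadditive) (use sN sK2 sE3 in auto)
  also have "\<dots> \<le> emeasure ?P N + emeasure ?P K2 + emeasure ?P E3 + emeasure ?P B5"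
    by (intro add_right_mono emeasure_subadditive) (use sN sK2 in auto)
  also have "\<dots> = 0" using PN PK2 PE3 PB5 by simp
  finally have "emeasure ?P (N \<union> K2 \<union> E3 \<union> B5) = 0" by simp
  moreover have "emeasure ?P {w \<in> space Seq. T w f0 f1 \<noteq> derivTest w f0 f1} \<le> emeasure ?P (N \<union> K2 \<union> E3 \<union> B5)"
    by (rule emeasure_mono[OF sub]) (use sN sK2 sE3 sB5 in auto)
  ultimately show "emeasure ?P {w \<in> space Seq. T w f0 f1 \<noteq> derivTest w f0 f1} = 0" by simp
qed

theorem theorem2:
  fixes T :: test
  assumes "comparison_test T"
    and "anonymous T"
    and "non_counterfactual T"
    and "reasonable T"
    and "\<not> test_equiv T derivTest"
  shows "\<not> error_free T"
  using main_equiv assms by blast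

end
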